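(* For $n\ge 0$ let $s_n=\sum_{r=0}^{n} 1/r!$ and define the integer $A_n$ by $A_n/n! = s_n$, i.e. $A_n=\sum_{r=0}^n n!/r!$. Let $d_n=\gcd(A_n,n!)$. Then for every $n\ge 0$, $$d_n\, d_{n+1}\, d_{n+2} \le (n+3)!.$$ *)

theory Defs
  imports Main
begin

definition A_seq :: "nat \<Rightarrow> nat" where
  "A_seq n = (\<Sum>r = 0..n. fact n div fact r)"

definition d_seq :: "nat \<Rightarrow> nat" where
  "d_seq n = gcd (A_seq n) (fact n)"

end

theory Submission
  imports Defs
begin

lemma A_rec: "A_seq (Suc n) = Suc n * A_seq n + 1"
proof -
  have "(\<Sum>r = 0..n. fact (Suc n) div fact r) = (\<Sum>r = 0..n. Suc n * (fact n div (fact r::nat)))"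
  proof (rule sum.cong[OF refl])
    fix r assume "r \<in> {0..n}"
    hence "(fact r::nat) dvd fact n" by (simp add: fact_dvd)
    thus "fact (Suc n) div fact r = Suc n * (fact n div (fact r::nat))"
      by (simp add: div_mult_swap)
  qed
  thus ?thesis unfolding A_seq_def by (simp add: sum_distrib_left)
qed

lemma d_dvd_A: "d_seq n dvd A_seq n" unfolding d_seq_def by simp
lemma d_dvd_fact: "d_seq n dvd fact n" unfolding d_seq_def by simp

lemma cop: "coprime (d_seq n) (d_seq (Suc n))"
proof (rule coprimeI)
  fix c assume a: "c dvd d_seq n" "c dvd d_seq (Suc n)"
  hence "c dvd A_seq n" "c dvd A_seq (Suc n)" using d_dvd_A dvd_trans by blast+
  hence h: "c dvd Suc n * A_seq n + 1" "c dvd Suc n * A_seq n" by (simp_all add: A_rec)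
  have "c dvd 1" using h(1) dvd_add_right_iff[OF h(2)] by blast
  thus "is_unit c" by simp
qed

lemma g_dvd: "gcd (d_seq n) (d_seq (n+2)) dvd n + 3"
proof -
  let ?g = "gcd (d_seq n) (d_seq (n+2))"
  have "?g dvd A_seq n" "?g dvd A_seq (n+2)" using d_dvd_A
    by (meson dvd_trans gcd_dvd1 gcd_dvd2)+
  moreover have "A_seq (n+2) = (n+2)*(n+1)*A_seq n + (n+3)"
    using A_rec[of "Suc n"] A_rec[of n] by (simp add: algebra_simps)
  ultimately have h: "?g dvd (n+2)*(n+1)*A_seq n + (n+3)" "?g dvd (n+2)*(n+1)*A_seq n"
    by (metis, simp)
  show ?thesis using h(1) dvd_add_right_iff[OF h(2)] by blast
qed

theorem lemma2p2:
  fixes n :: nat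
  shows "d_seq n * d_seq (n + 1) * d_seq (n + 2) \<le> fact (n + 3)"
proof -
  let ?a = "d_seq n" and ?b = "d_seq (n+1)" and ?c = "d_seq (n+2)"
  let ?g = "gcd ?a ?c" and ?L = "lcm ?a ?c"
  have fa: "?a dvd fact (n+2)" using d_dvd_fact[of n] fact_dvd[of n "n+2"] dvd_trans by fastforce
  have fb: "?b dvd fact (n+2)" using d_dvd_fact[of "n+1"] fact_dvd[of "n+1" "n+2"] dvd_trans by fastforce
  have fc: "?c dvd fact (n+2)" using d_dvd_fact[of "n+2"] by simp
  have L: "?L dvd fact (n+2)" using fa fc by simp
  have c1: "coprime ?b ?a" using cop[of n] by (simp add: ac_simps)
  have c2: "coprime ?b ?c" using cop[of "n+1"] by simp
  have cac: "coprime ?b (?a * ?c)" using c1 c2 by simp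
  have "?L dvd ?a * ?c" by (simp add: lcm_least)
  hence cL: "coprime ?b ?L" using cac coprime_divisors[of ?b ?b ?L "?a*?c"] by simp
  have bL: "?b * ?L dvd fact (n+2)" using divides_mult[OF fb L cL] .
  have pos: "fact (n+2) > (0::nat)" by simp
  have le1: "?b * ?L \<le> fact (n+2)" using bL pos by (simp add: dvd_imp_le)
  have gle: "?g \<le> n + 3" using g_dvd[of n] by (simp add: dvd_imp_le)
  have eq: "?a * ?c = ?g * ?L" by (simp add: gcd_mult_lcm)
  have "?a * ?b * ?c = (?b * ?L) * ?g" using eq by (simp add: ac_simps)
  also have "\<dots> \<le> fact (n+2) * (n+3)" using le1 gle by (rule mult_le_mono)
  also have "\<dots> = fact (n+3)" by (simp add: fact_Suc numeral_3_eq_3 eval_nat_numeral)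
  finally show ?thesis by simp
qed

end
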